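(* Let $\mathbf t_1,\mathbf t_2$ be hyper-terms with $\mathrm{supp}(\mathbf t_1)\cap\mathrm{supp}(\mathbf t_2)=\emptyset$ and $Q$ a post hyper-assertion. Then $$\mathrm{wp}\,\mathbf t_1\,\{\lambda\mathbf v.\ \mathrm{wp}\,\mathbf t_2\,\{\lambda\mathbf w.\ Q(\mathbf v\uplus\mathbf w)\}\}\ \dashv\vdash\ \mathrm{wp}\,(\mathbf t_1\uplus\mathbf t_2)\,\{Q\}.$$
   Context: Setting. $\mathrm{Val}=\mathbb{Z}$; $\mathrm{PVar}$ is a countably infinite set of program variables; a store is a function $s:\mathrm{PVar}\to\mathrm{Val}$; indices are $\mathrm{Idx}=\mathbb{N}$. Terms of a first-order imperative language are generated by $t ::= v \mid x \mid * \mid t\oplus t \mid \mathtt{skip}\mid x:=t \mid t;t \mid \mathtt{if}\ t\ \mathtt{then}\ t\ \mathtt{else}\ t \mid \mathtt{while}\ t\ \mathtt{do}\ t$, with a nondeterministic big-step semantics $t,s\Downarrow v,s'$. A hyper-term $\mathbf t$ is a finitely supported partial function from $\mathrm{Idx}$ to terms; a hyper-store is a total function $\mathbf s:\mathrm{Idx}\to\mathrm{Store}$; a hyper-return-value is a finitely supported partial function $\mathbf v:\mathrm{Idx}\rightharpoonup\mathrm{Val}$. $\uplus$ denotes union of partial maps with disjoint supports. $\mathbf t,\mathbf s\Downarrow\mathbf v,\mathbf s'$ holds iff for every $i\in\mathrm{supp}(\mathbf t)$, $\mathbf t(i),\mathbf s(i)\Downarrow\mathbf v(i),\mathbf s'(i)$,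 and for every $i\notin\mathrm{supp}(\mathbf t)$, $\mathbf s'(i)=\mathbf s(i)$ and $\mathbf v(i)$ is undefined. A hyper-assertion is a predicate on hyper-stores; a post hyper-assertion is an upward-closed map $Q$ from hyper-return-values to hyper-assertions (if $Q(\mathbf v)(\mathbf s)$ and $\mathbf v'$ agrees with $\mathbf v$ on $\mathrm{supp}(\mathbf v)$ then $Q(\mathbf v')(\mathbf s)$). $P\dashv\vdash R$ means $\forall\mathbf s.\ P(\mathbf s)\Leftrightarrow R(\mathbf s)$. $\mathrm{wp}\,\mathbf t\,\{Q\}(\mathbf s):\iff\forall\mathbf v,\mathbf s'.\ (\mathbf t,\mathbf s\Downarrow\mathbf v,\mathbf s')\Rightarrow Q(\mathbf v)(\mathbf s')$. *)

theory Defs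
  imports Main
begin

type_synonym val = int
type_synonym pvar = nat
type_synonym store = "pvar \<Rightarrow> val"
type_synonym idx = nat

text \<open>Terms. The binary operator of t (+) t is carried as an arbitrary function on values.\<close>
datatype "term" =
    Val val
  | Var pvar
  | Star
  | BinOp "val \<Rightarrow> val \<Rightarrow> val" "term" "term"
  | Skip
  | Assign pvar "term"
  | Seq "term" "term"
  | If "term" "term" "term"
  | While "term" "term"

text \<open>Nondeterministic big-step semantics t,s \<Down> v,s'. Conventions: a condition is true iff
  its value is nonzero; skip and a terminated loop return 0; x:=t returns the assigned value.\<close>
inductive bigstep :: "term \<Rightarrow> store \<Rightarrow> val \<Rightarrow> store \<Rightarrow> bool" where
  BVal: "bigstep (Val v) s v s"
| BVar: "bigstep (Var x) s (s x) s"
| BStar: "bigstep Star s v s"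
| BBin: "\<lbrakk>bigstep t1 s v1 s1; bigstep t2 s1 v2 s2\<rbrakk> \<Longrightarrow> bigstep (BinOp f t1 t2) s (f v1 v2) s2"
| BSkip: "bigstep Skip s 0 s"
| BAssign: "bigstep t s v s1 \<Longrightarrow> bigstep (Assign x t) s v (s1(x := v))"
| BSeq: "\<lbrakk>bigstep t1 s v1 s1; bigstep t2 s1 v2 s2\<rbrakk> \<Longrightarrow> bigstep (Seq t1 t2) s v2 s2"
| BIfT: "\<lbrakk>bigstep c s b s1; b \<noteq> 0; bigstep t1 s1 v s2\<rbrakk> \<Longrightarrow> bigstep (If c t1 t2) s v s2"
| BIfF: "\<lbrakk>bigstep c s 0 s1; bigstep t2 s1 v s2\<rbrakk> \<Longrightarrow> bigstep (If c t1 t2) s v s2"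
| BWhileF: "bigstep c s 0 s1 \<Longrightarrow> bigstep (While c t) s 0 s1"
| BWhileT: "\<lbrakk>bigstep c s b s1; b \<noteq> 0; bigstep t s1 u s2; bigstep (While c t) s2 v s3\<rbrakk>
             \<Longrightarrow> bigstep (While c t) s v s3"

text \<open>Hyper-terms and hyper-return-values are partial maps Idx \<rightharpoonup> _ (finite support is
  imposed where relevant); hyper-stores are total maps.\<close>
type_synonym hterm = "idx \<rightharpoonup> term"
type_synonym hstore = "idx \<Rightarrow> store"
type_synonym hval = "idx \<rightharpoonup> val"
type_synonym hassn = "hstore \<Rightarrow> bool"
type_synonym hpost = "hval \<Rightarrow> hassn"

definition hbigstep :: "hterm \<Rightarrow> hstore \<Rightarrow> hval \<Rightarrow> hstore \<Rightarrow> bool" where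
  "hbigstep t s v s' \<longleftrightarrow>
     (\<forall>i\<in>dom t. \<exists>u. v i = Some u \<and> bigstep (the (t i)) (s i) u (s' i)) \<and>
     (\<forall>i. i \<notin> dom t \<longrightarrow> s' i = s i \<and> v i = None)"

text \<open>Disjoint union of partial maps (used only on maps with disjoint supports).\<close>
definition dunion :: "(idx \<rightharpoonup> 'a) \<Rightarrow> (idx \<rightharpoonup> 'a) \<Rightarrow> (idx \<rightharpoonup> 'a)" (infixl "\<uplus>" 65) where
  "f \<uplus> g = f ++ g"

definition post_hassn :: "hpost \<Rightarrow> bool" where
  "post_hassn Q \<longleftrightarrow>
     (\<forall>v v' s. finite (dom v) \<and> finite (dom v') \<and> Q v s \<and> v \<subseteq>\<^sub>m v' \<longrightarrow> Q v' s)"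

definition bientails :: "hassn \<Rightarrow> hassn \<Rightarrow> bool" (infix "\<stileturn>\<turnstile>" 50) where
  "P \<stileturn>\<turnstile> R \<longleftrightarrow> (\<forall>s. P s = R s)"

definition wp :: "hterm \<Rightarrow> hpost \<Rightarrow> hassn" where
  "wp t Q s \<longleftrightarrow> (\<forall>v s'. hbigstep t s v s' \<longrightarrow> Q v s')"

end

theory Submission
  imports Defs
begin

theorem mainTheorem8:
  fixes t1 t2 :: hterm and Q :: hpost
  assumes "finite (dom t1)" and "finite (dom t2)"
    and "dom t1 \<inter> dom t2 = {}"
    and "post_hassn Q"
  shows "wp t1 (\<lambda>v. wp t2 (\<lambda>w. Q (v \<uplus> w))) \<stileturn>\<turnstile> wp (t1 \<uplus> t2) Q"
  unfolding bientails_def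
proof (intro allI iffI)
  fix s
  assume H: "wp t1 (\<lambda>v. wp t2 (\<lambda>w. Q (v \<uplus> w))) s"
  show "wp (t1 \<uplus> t2) Q s"
    unfolding wp_def
  proof (intro allI impI)
    fix v s'
    assume B: "hbigstep (t1 \<uplus> t2) s v s'"
    define v1 where "v1 = v |` dom t1"
    define v2 where "v2 = v |` dom t2"
    define s1 where "s1 = (\<lambda>i. if i \<in> dom t1 then s' i else s i)"
    have dt: "dom (t1 \<uplus> t2) = dom t1 \<union> dom t2" by (auto simp add: dunion_def)
    have t1i: "i \<in> dom t1 \<Longrightarrow> (t1 \<uplus> t2) i = t1 i" for i
      using assms(3) by (auto simp: dunion_def map_add_def split: option.splits)
    have t2i: "i \<in> dom t2 \<Longrightarrow> (t1 \<uplus> t2) i = t2 i" for i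
      by (auto simp: dunion_def map_add_def split: option.splits)
    have BB: "\<And>i. i \<in> dom t1 \<union> dom t2 \<Longrightarrow> \<exists>u. v i = Some u \<and> bigstep (the ((t1 \<uplus> t2) i)) (s i) u (s' i)"
      and BN: "\<And>i. i \<notin> dom t1 \<union> dom t2 \<Longrightarrow> s' i = s i \<and> v i = None"
      using B unfolding hbigstep_def dt by auto
    have h1: "hbigstep t1 s v1 s1"
      unfolding hbigstep_def
    proof (intro conjI allI impI ballI)
      fix i assume i: "i \<in> dom t1"
      then show "\<exists>u. v1 i = Some u \<and> bigstep (the (t1 i)) (s i) u (s1 i)"
        using BB[of i] t1i[OF i] by (auto simp: v1_def s1_def)
    next
      fix i assume i: "i \<notin> dom t1"
      then show "s1 i = s i" "v1 i = None" by (auto simp: v1_def s1_def)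
    qed
    have h2: "hbigstep t2 s1 v2 s'"
      unfolding hbigstep_def
    proof (intro conjI allI impI ballI)
      fix i assume i: "i \<in> dom t2"
      then have "i \<notin> dom t1" using assms(3) by auto
      then show "\<exists>u. v2 i = Some u \<and> bigstep (the (t2 i)) (s1 i) u (s' i)"
        using BB[of i] t2i[OF i] i by (auto simp: v2_def s1_def)
    next
      fix i assume i: "i \<notin> dom t2"
      then show "s' i = s1 i" "v2 i = None" using BN[of i] by (auto simp: v2_def s1_def)
    qed
    have "v1 \<uplus> v2 = v"
    proof
      fix i show "(v1 \<uplus> v2) i = v i"
      proof (cases "i \<in> dom t1 \<union> dom t2")
        case True
        then show ?thesis using BB[of i] by (auto simp: v1_def v2_def dunion_def map_add_def restrict_map_def split: option.splits)
      next
        case False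
        then show ?thesis using BN[of i] by (auto simp: v1_def v2_def dunion_def map_add_def restrict_map_def)
      qed
    qed
    with H h1 h2 show "Q v s'" unfolding wp_def by metis
  qed
next
  fix s
  assume H: "wp (t1 \<uplus> t2) Q s"
  show "wp t1 (\<lambda>v. wp t2 (\<lambda>w. Q (v \<uplus> w))) s"
    unfolding wp_def
  proof (intro allI impI)
    fix v1 s1 v2 s2
    assume B1: "hbigstep t1 s v1 s1" and B2: "hbigstep t2 s1 v2 s2"
    have "hbigstep (t1 \<uplus> t2) s (v1 \<uplus> v2) s2"
      unfolding hbigstep_def
    proof (intro conjI allI impI ballI)
      fix i assume i: "i \<in> dom (t1 \<uplus> t2)"
      show "\<exists>u. (v1 \<uplus> v2) i = Some u \<and> bigstep (the ((t1 \<uplus> t2) i)) (s i) u (s2 i)"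
      proof (cases "i \<in> dom t2")
        case True
        then have "i \<notin> dom t1" using assms(3) by auto
        have "s1 i = s i" using B1 \<open>i \<notin> dom t1\<close> unfolding hbigstep_def by auto
        moreover obtain u where "v2 i = Some u" "bigstep (the (t2 i)) (s1 i) u (s2 i)"
          using B2 True unfolding hbigstep_def by blast
        moreover have "(t1 \<uplus> t2) i = t2 i" "(v1 \<uplus> v2) i = v2 i"
          using True \<open>v2 i = Some u\<close> by (auto simp: dunion_def map_add_def split: option.splits)
        ultimately show ?thesis by auto
      next
        case False
        then have "i \<in> dom t1" using i by (auto simp: dunion_def)
        then show ?thesis using False B1 B2 unfolding hbigstep_def dunion_def
          by (auto simp: map_add_def split: option.splits)
      qed
    next
      fix i assume "i \<notin> dom (t1 \<uplus> t2)"
      then show "s2 i = s i" "(v1 \<uplus> v2) i = None"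
        using B1 B2 unfolding hbigstep_def dunion_def by auto
    qed
    then show "Q (v1 \<uplus> v2) s2" using H unfolding wp_def by blast
  qed
qed

end
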